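(* For all positive integers $p,q$, \[ L_s(p,q) \geq 2^{\frac{pq(q-1)}{2}}\, N_s(q)^{\frac{p(p-1)}{2}} - 1. \]
   Context: All graphs are simple undirected labeled graphs on the vertex set $\{1,\dots,n\}$. For such a graph with adjacency matrix $W$ and degree matrix $D$, its Laplacian is $L = D - W$; if the graph has at least one edge, its normalized Laplacian matrix is $\frac{1}{\mathrm{Tr}(L)}L$, which is a density matrix (Hermitian, positive semidefinite, trace $1$). An $n\times n$ density matrix $\rho$ with $n=pq$ is separable in $\mathbb{C}^p\otimes\mathbb{C}^q$ if $\rho=\sum_i c_i\,\rho_i\otimes\eta_i$ (finite sum) where the $\rho_i$ are $p\times p$ density matrices, the $\eta_i$ are $q\times q$ density matrices, $c_i\ge 0$ and $\sum_i c_i=1$; otherwise it is entangled. $L_s(p,q)$ denotes the number of labeled graphs on $n=pq$ vertices with at least one edge whose normalized Laplacian matrix is separable in $\mathbb{C}^p\otimes\mathbb{C}^q$, and $L_e(p,q)$ the number of those whose normalized Laplacian is entangled; thus $L_s(p,q)+L_e(p,q)=L(pq):=2^{pq(pq-1)/2}-1$. A square matrix is line sum symmetric if for each $i$ its $i$-th row sum equals its $i$-th column sum. $N_s(n)$ denotes the number of $n\times n$ matrices with entries in $\{0,1\}$ that are line sum symmetric, and $N_e(n)=2^{n^2}-N_s(n)$ the number of $n\times n$ $0$-$1$ matrices that are not line sum symmetric. *)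

theory Defs
  imports Complex_Main
begin

text \<open>Vertices of a graph on n vertices are 0,...,n-1 (a relabelling of 1..n).
  Square matrices of size m are functions nat => nat => complex whose entries
  with indices < m are relevant.\<close>

definition all_edges :: "nat \<Rightarrow> nat set set" where
  "all_edges n = {{i, j} | i j. i < n \<and> j < n \<and> i \<noteq> j}"

definition graphs :: "nat \<Rightarrow> nat set set set" where
  "graphs n = {E. E \<subseteq> all_edges n}"

definition adjacency :: "nat set set \<Rightarrow> nat \<Rightarrow> nat \<Rightarrow> complex" where
  "adjacency E i j = (if {i, j} \<in> E then 1 else 0)"

definition degree :: "nat set set \<Rightarrow> nat \<Rightarrow> nat" where
  "degree E i = card {j. {i, j} \<in> E}"

definition laplacian :: "nat set set \<Rightarrow> nat \<Rightarrow> nat \<Rightarrow> complex" where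
  "laplacian E i j = (if i = j then of_nat (degree E i) else 0) - adjacency E i j"

definition mtrace :: "nat \<Rightarrow> (nat \<Rightarrow> nat \<Rightarrow> complex) \<Rightarrow> complex" where
  "mtrace m A = (\<Sum>i<m. A i i)"

definition normalized_laplacian :: "nat \<Rightarrow> nat set set \<Rightarrow> nat \<Rightarrow> nat \<Rightarrow> complex" where
  "normalized_laplacian n E i j = laplacian E i j / mtrace n (laplacian E)"

definition hermitian_mat :: "nat \<Rightarrow> (nat \<Rightarrow> nat \<Rightarrow> complex) \<Rightarrow> bool" where
  "hermitian_mat m A \<longleftrightarrow> (\<forall>i<m. \<forall>j<m. A i j = cnj (A j i))"

definition psd_mat :: "nat \<Rightarrow> (nat \<Rightarrow> nat \<Rightarrow> complex) \<Rightarrow> bool" where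
  "psd_mat m A \<longleftrightarrow> hermitian_mat m A \<and>
     (\<forall>x :: nat \<Rightarrow> complex. 0 \<le> Re (\<Sum>i<m. \<Sum>j<m. cnj (x i) * A i j * x j))"

definition density_mat :: "nat \<Rightarrow> (nat \<Rightarrow> nat \<Rightarrow> complex) \<Rightarrow> bool" where
  "density_mat m A \<longleftrightarrow> psd_mat m A \<and> mtrace m A = 1"

text \<open>Separability in C^p (x) C^q, with basis index (a,b) (a<p, b<q) identified with
  a*q+b, i.e. the Kronecker product (R (x) S) (a*q+b) (c*q+d) = R a c * S b d.\<close>

definition separable :: "nat \<Rightarrow> nat \<Rightarrow> (nat \<Rightarrow> nat \<Rightarrow> complex) \<Rightarrow> bool" where
  "separable p q \<rho> \<longleftrightarrow>
     (\<exists>(k::nat) (c::nat \<Rightarrow> real) (R::nat \<Rightarrow> nat \<Rightarrow> nat \<Rightarrow> complex) (S::nat \<Rightarrow> nat \<Rightarrow> nat \<Rightarrow> complex).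
        (\<forall>l<k. c l \<ge> 0 \<and> density_mat p (R l) \<and> density_mat q (S l)) \<and>
        (\<Sum>l<k. c l) = 1 \<and>
        (\<forall>x<p*q. \<forall>y<p*q. \<rho> x y =
            (\<Sum>l<k. of_real (c l) * R l (x div q) (y div q) * S l (x mod q) (y mod q))))"

definition L_s :: "nat \<Rightarrow> nat \<Rightarrow> nat" where
  "L_s p q = card {E \<in> graphs (p*q). E \<noteq> {} \<and> separable p q (normalized_laplacian (p*q) E)}"

definition line_sum_symmetric :: "nat \<Rightarrow> (nat \<Rightarrow> nat \<Rightarrow> nat) \<Rightarrow> bool" where
  "line_sum_symmetric n M \<longleftrightarrow> (\<forall>i<n. (\<Sum>j<n. M i j) = (\<Sum>j<n. M j i))"

definition zero_one_mats :: "nat \<Rightarrow> (nat \<Rightarrow> nat \<Rightarrow> nat) set" where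
  "zero_one_mats n = {M. (\<forall>i j. M i j \<in> {0, 1}) \<and> (\<forall>i j. \<not> (i < n \<and> j < n) \<longrightarrow> M i j = 0)}"

definition N_s :: "nat \<Rightarrow> nat" where
  "N_s n = card {M \<in> zero_one_mats n. line_sum_symmetric n M}"

end

theory Submission
  imports Defs "HOL-Library.FuncSet" "HOL-Library.Real_Mod"
begin


lemma idx_lt: "a < p \<Longrightarrow> b < (q::nat) \<Longrightarrow> a*q+b < p*q"
proof -
  assume "a < p" "b < q"
  hence "a*q+b < a*q+q" by simp
  also have "... = (a+1)*q" by simp
  also have "... \<le> p*q" using \<open>a<p\<close> by (intro mult_right_mono) auto
  finally show ?thesis .
qed

lemma idx_div[simp]: "b < (q::nat) \<Longrightarrow> (a*q+b) div q = a" by simp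
lemma idx_mod[simp]: "b < (q::nat) \<Longrightarrow> (a*q+b) mod q = b" by simp

lemma idx_inj: "b < (q::nat) \<Longrightarrow> b' < q \<Longrightarrow> a*q+b = a'*q+b' \<longleftrightarrow> a = a' \<and> b = b'"
  by (metis idx_div idx_mod)

lemma sum_pq: 
  fixes f :: "nat \<Rightarrow> nat \<Rightarrow> 'a::comm_monoid_add"
  assumes "q > 0"
  shows "(\<Sum>x<p*q. f (x div q) (x mod q)) = (\<Sum>a<p. \<Sum>b<q. f a b)"
proof -
  have bij: "bij_betw (\<lambda>(a,b). a*q+b) ({..<p}\<times>{..<q}) {..<p*q}"
  proof (rule bij_betw_imageI)
    show "inj_on (\<lambda>(a,b). a*q+b) ({..<p}\<times>{..<q})"
      by (auto simp: inj_on_def idx_inj)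
    show "(\<lambda>(a,b). a*q+b) ` ({..<p}\<times>{..<q}) = {..<p*q}"
    proof
      show "(\<lambda>(a,b). a*q+b) ` ({..<p}\<times>{..<q}) \<subseteq> {..<p*q}" by (auto intro: idx_lt)
      show "{..<p*q} \<subseteq> (\<lambda>(a,b). a*q+b) ` ({..<p}\<times>{..<q})"
      proof
        fix x assume "x \<in> {..<p*q}"
        hence "x div q < p" using assms by (simp add: less_mult_imp_div_less)
        moreover have "x mod q < q" using assms by simp
        moreover have "x = (x div q)*q + x mod q" by simp
        ultimately show "x \<in> (\<lambda>(a,b). a*q+b) ` ({..<p}\<times>{..<q})" by force
      qed
    qed
  qed
  have "(\<Sum>x<p*q. f (x div q) (x mod q)) = (\<Sum>z\<in>{..<p}\<times>{..<q}. f ((fst z*q+snd z) div q) ((fst z*q+snd z) mod q))"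
    using sum.reindex_bij_betw[OF bij, of "\<lambda>x. f (x div q) (x mod q)", symmetric]
    by (simp add: case_prod_beta)
  also have "... = (\<Sum>z\<in>{..<p}\<times>{..<q}. f (fst z) (snd z))"
    by (intro sum.cong) auto
  also have "... = (\<Sum>a<p. \<Sum>b<q. f a b)" by (simp add: sum.cartesian_product case_prod_beta)
  finally show ?thesis .
qed

lemma cis_sum:
  fixes m :: nat and d :: int
  assumes "m > 0"
  shows "(\<Sum>k<m. cis (2*pi*real k*d/m)) = (if m dvd d then of_nat m else 0)"
proof -
  let ?w = "cis (2*pi*d/m)"
  have pw: "cis (2*pi*real k*d/m) = ?w ^ k" for k by (simp add: DeMoivre mult_ac)
  have wm: "?w ^ m = 1" using assms by (simp add: DeMoivre)
  show ?thesis
  proof (cases "int m dvd d")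
    case True
    then obtain j where "d = int m * j" by blast
    hence "2*pi*d/m = 2*pi*of_int j" using assms by simp
    hence "?w = 1" by (metis cis_multiple_2pi Ints_of_int)
    thus ?thesis using True by (simp add: pw)
  next
    case False
    have "?w \<noteq> 1"
    proof
      assume "?w = 1"
      then obtain n where "2*pi*d/m = of_int n * (2*pi)" by (auto simp: cis_eq_1_iff)
      hence "real_of_int d = real_of_int (n * int m)" using assms by (simp add: field_simps)
      hence "d = n * m" by (simp only: of_int_eq_iff)
      thus False using False by simp
    qed
    hence "(\<Sum>k<m. ?w ^ k) = 0" using geometric_sum[of ?w m] wm by simp
    thus ?thesis using False by (simp add: pw)
  qed
qed



definition gen :: "nat \<Rightarrow> real \<Rightarrow> (nat\<Rightarrow>complex) \<Rightarrow> (nat\<Rightarrow>complex) \<Rightarrow> nat\<Rightarrow>nat\<Rightarrow>complex" where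
  "gen q c u w = (\<lambda>x y. of_real c * u (x div q) * cnj (u (y div q)) * w (x mod q) * cnj (w (y mod q)))"

inductive cone :: "nat \<Rightarrow> (nat\<Rightarrow>nat\<Rightarrow>complex) \<Rightarrow> bool" for q where
  zero: "cone q (\<lambda>x y. 0)"
| step: "cone q A \<Longrightarrow> c \<ge> 0 \<Longrightarrow> cone q (\<lambda>x y. A x y + gen q c u w x y)"

lemma cone_gen: "c \<ge> 0 \<Longrightarrow> cone q (gen q c u w)"
  using cone.step[OF cone.zero, of c q u w] by simp

lemma cone_add: assumes "cone q B" "cone q A" shows "cone q (\<lambda>x y. A x y + B x y)"
  using assms(1)
proof induction
  case zero thus ?case using assms(2) by simp
next
  case (step B c u w)
  have "cone q (\<lambda>x y. (A x y + B x y) + gen q c u w x y)" by (rule cone.step[OF step.IH step.hyps(2)])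
  thus ?case by (simp add: add.assoc)
qed

lemma cone_sum: assumes "finite I" "\<And>i. i \<in> I \<Longrightarrow> cone q (F i)"
  shows "cone q (\<lambda>x y. \<Sum>i\<in>I. F i x y)"
  using assms
proof (induction I rule: finite_induct)
  case empty thus ?case by (simp add: cone.zero)
next
  case (insert i I)
  have "cone q (\<lambda>x y. (\<Sum>i\<in>I. F i x y) + F i x y)"
    by (rule cone_add) (use insert in auto)
  thus ?case using insert by (simp add: add.commute)
qed

lemma cone_rep: assumes "cone q A"
  shows "\<exists>(k::nat) c u w. (\<forall>l<k. c l \<ge> 0) \<and> (\<forall>x y. A x y = (\<Sum>l<k. gen q (c l) (u l) (w l) x y))"
  using assms
proof induction
  case zero
  show ?case
    by (rule exI[of _ "0::nat"]) simp
next
  case (step A c0 u0 w0)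
  then obtain k :: nat and c u w where h: "\<forall>l<k. c l \<ge> 0" "\<forall>x y. A x y = (\<Sum>l<k. gen q (c l) (u l) (w l) x y)" by blast
  show ?case
  proof (intro exI conjI allI impI)
    fix l assume "l < Suc k" thus "(c(k:=c0)) l \<ge> 0" using h step by auto
  next
    fix x y
    have "(\<Sum>l<k. gen q ((c(k:=c0)) l) ((u(k:=u0)) l) ((w(k:=w0)) l) x y) = (\<Sum>l<k. gen q (c l) (u l) (w l) x y)"
      by (intro sum.cong) auto
    thus "A x y + gen q c0 u0 w0 x y = (\<Sum>l<Suc k. gen q ((c(k:=c0)) l) ((u(k:=u0)) l) ((w(k:=w0)) l) x y)"
      using h by simp
  qed
qed

lemma mult_cnj_real: "z * cnj z = complex_of_real ((cmod z)^2)"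
  by (simp add: complex_mult_cnj cmod_power2)

lemma rk1_density:
  assumes "nv = (\<Sum>i<m. (cmod (v i))^2)" "nv > 0"
  shows "density_mat m (\<lambda>i j. v i * cnj (v j) / of_real nv)"
proof -
  have herm: "hermitian_mat m (\<lambda>i j. v i * cnj (v j) / of_real nv)"
    unfolding hermitian_mat_def by (simp add: mult.commute)
  have quad: "0 \<le> Re (\<Sum>i<m. \<Sum>j<m. cnj (x i) * (v i * cnj (v j) / of_real nv) * x j)" for x :: "nat \<Rightarrow> complex"
  proof -
    let ?s = "\<Sum>i<m. cnj (x i) * v i"
    have "(\<Sum>i<m. \<Sum>j<m. cnj (x i) * (v i * cnj (v j) / of_real nv) * x j)
        = (\<Sum>i<m. \<Sum>j<m. (cnj (x i) * v i) * (cnj (cnj (x j) * v j))) / of_real nv"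
      by (simp add: sum_divide_distrib mult_ac)
    also have "... = (?s * cnj ?s) / of_real nv"
      by (simp add: sum_product)
    also have "... = of_real ((cmod ?s)^2 / nv)" by (simp only: mult_cnj_real) simp
    finally show ?thesis using assms(2) by simp
  qed
  have tr: "mtrace m (\<lambda>i j. v i * cnj (v j) / of_real nv) = 1"
  proof -
    have "mtrace m (\<lambda>i j. v i * cnj (v j) / of_real nv) = (\<Sum>i<m. of_real ((cmod (v i))^2)) / of_real nv"
      unfolding mtrace_def by (simp add: sum_divide_distrib mult_cnj_real)
    also have "... = of_real nv / of_real nv" using assms(1) by (simp only: of_real_sum)
    also have "... = 1" using assms(2) by simp
    finally show ?thesis .
  qed
  show ?thesis unfolding density_mat_def psd_mat_def using herm quad tr by blast
qed

lemma separable_cong: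
  assumes "separable p q \<rho>" "\<And>x y. x < p*q \<Longrightarrow> y < p*q \<Longrightarrow> \<rho> x y = \<rho>' x y"
  shows "separable p q \<rho>'"
proof -
  from assms(1) obtain k :: nat and c R S where h: "\<forall>l<k. c l \<ge> 0 \<and> density_mat p (R l) \<and> density_mat q (S l)"
    "(\<Sum>l<k. c l) = 1"
    "\<forall>x<p*q. \<forall>y<p*q. \<rho> x y = (\<Sum>l<k. of_real (c l) * R l (x div q) (y div q) * S l (x mod q) (y mod q))"
    unfolding separable_def by blast
  show ?thesis unfolding separable_def
    by (rule exI[of _ k], rule exI[of _ c], rule exI[of _ R], rule exI[of _ S]) (use h assms(2) in auto)
qed



lemma gen_diag: "gen q c u w x x = of_real (c * (cmod (u (x div q)))^2 * (cmod (w (x mod q)))^2)"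
proof -
  have "gen q c u w x x = of_real c * (u (x div q) * cnj (u (x div q))) * (w (x mod q) * cnj (w (x mod q)))"
    by (simp add: gen_def mult_ac)
  thus ?thesis by (simp only: mult_cnj_real) simp
qed

lemma zero_of_norm: assumes "(\<Sum>i<(p::nat). (cmod (u i))^2) = 0" "a < p" shows "u a = 0"
proof -
  have "\<forall>i\<in>{..<p}. (cmod (u i))^2 = 0" using assms(1) sum_nonneg_eq_0_iff[OF finite_lessThan, where f="\<lambda>i. (cmod (u i))^2"] by simp
  thus ?thesis using assms(2) by simp
qed

lemma cone_separable:
  assumes "cone q B" "p \<ge> 1" "q \<ge> 1" "t > 0" "mtrace (p*q) B = of_real t"
  shows "separable p q (\<lambda>x y. B x y / of_real t)"
proof -
  obtain k :: nat and c u w where h: "\<forall>l<k. c l \<ge> 0" "\<forall>x y. B x y = (\<Sum>l<k. gen q (c l) (u l) (w l) x y)"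
    using cone_rep[OF assms(1)] by blast
  define nu where "nu l = (\<Sum>i<p. (cmod (u l i))^2)" for l
  define nw where "nw l = (\<Sum>i<q. (cmod (w l i))^2)" for l
  define e0 :: "nat \<Rightarrow> complex" where "e0 i = (if i = 0 then 1 else 0)" for i
  define u' where "u' l = (if nu l > 0 then u l else e0)" for l
  define w' where "w' l = (if nw l > 0 then w l else e0)" for l
  define nu' where "nu' l = (if nu l > 0 then nu l else 1)" for l
  define nw' where "nw' l = (if nw l > 0 then nw l else 1)" for l
  define R where "R l = (\<lambda>i j. u' l i * cnj (u' l j) / of_real (nu' l))" for l
  define S where "S l = (\<lambda>i j. w' l i * cnj (w' l j) / of_real (nw' l))" for l
  define c' where "c' l = c l * nu l * nw l / t" for l
  have nu0: "nu l \<ge> 0" for l unfolding nu_def by (intro sum_nonneg) auto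
  have nw0: "nw l \<ge> 0" for l unfolding nw_def by (intro sum_nonneg) auto
  have e0n: "(\<Sum>i<m. (cmod (e0 i))^2) = 1" if "m \<ge> 1" for m
  proof -
    have "(\<Sum>i<m. (cmod (e0 i))^2) = (\<Sum>i\<in>{0}. (cmod (e0 i))^2)"
      by (rule sum.mono_neutral_right) (use that in \<open>auto simp: e0_def\<close>)
    thus ?thesis by (simp add: e0_def)
  qed
  have dR: "density_mat p (R l)" for l
    unfolding R_def
    by (rule rk1_density) (use e0n[OF assms(2)] in \<open>auto simp: nu'_def u'_def nu_def\<close>)
  have dS: "density_mat q (S l)" for l
    unfolding S_def
    by (rule rk1_density) (use e0n[OF assms(3)] in \<open>auto simp: nw'_def w'_def nw_def\<close>)
  have c'0: "\<forall>l<k. c' l \<ge> 0" using h(1) nu0 nw0 assms(4) unfolding c'_def by auto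
  have qpos: "q > 0" using assms(3) by simp
  have trB: "mtrace (p*q) B = of_real (\<Sum>l<k. c l * nu l * nw l)"
  proof -
    have "mtrace (p*q) B = (\<Sum>x<p*q. \<Sum>l<k. of_real (c l * (cmod (u l (x div q)))^2 * (cmod (w l (x mod q)))^2))"
      unfolding mtrace_def using h(2) by (simp add: gen_diag)
    also have "... = of_real (\<Sum>l<k. \<Sum>x<p*q. c l * (cmod (u l (x div q)))^2 * (cmod (w l (x mod q)))^2)"
      by (simp add: sum.swap[of _ "{..<p*q}"])
    also have "... = of_real (\<Sum>l<k. c l * nu l * nw l)"
    proof -
      have "(\<Sum>x<p*q. c l * (cmod (u l (x div q)))^2 * (cmod (w l (x mod q)))^2) = c l * nu l * nw l" for l
        using sum_pq[OF qpos, of "\<lambda>a b. c l * (cmod (u l a))^2 * (cmod (w l b))^2" p]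
        by (simp add: nu_def nw_def sum_distrib_left sum_distrib_right sum_product mult_ac)
      thus ?thesis by simp
    qed
    finally show ?thesis .
  qed
  hence tsum: "(\<Sum>l<k. c l * nu l * nw l) = t" using assms(5) by (metis of_real_eq_iff)
  have c'sum: "(\<Sum>l<k. c' l) = 1"
    unfolding c'_def using tsum assms(4) by (simp add: sum_divide_distrib[symmetric])
  have entry: "B x y / of_real t = (\<Sum>l<k. of_real (c' l) * R l (x div q) (y div q) * S l (x mod q) (y mod q))"
    if xy: "x < p*q" "y < p*q" for x y
  proof -
    have xd: "x div q < p" "y div q < p" using xy qpos by (auto simp: less_mult_imp_div_less)
    have xm: "x mod q < q" "y mod q < q" using qpos by auto
    have trm: "gen q (c l) (u l) (w l) x y / of_real t = of_real (c' l) * R l (x div q) (y div q) * S l (x mod q) (y mod q)" for l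
    proof (cases "nu l > 0 \<and> nw l > 0")
      case True
      hence "nu l \<noteq> 0" "nw l \<noteq> 0" by auto
      thus ?thesis using True assms(4)
        by (simp add: gen_def c'_def R_def S_def u'_def w'_def nu'_def nw'_def field_simps)
    next
      case False
      hence "nu l = 0 \<or> nw l = 0" using nu0[of l] nw0[of l] by auto
      hence "gen q (c l) (u l) (w l) x y = 0 \<and> c' l = 0"
      proof
        assume "nu l = 0"
        hence "u l (x div q) = 0" using zero_of_norm[where p=p and u="u l"] xd unfolding nu_def by simp
        thus ?thesis using \<open>nu l = 0\<close> by (simp add: gen_def c'_def)
      next
        assume "nw l = 0"
        hence "w l (x mod q) = 0" using zero_of_norm[where p=q and u="w l"] xm unfolding nw_def by simp
        thus ?thesis using \<open>nw l = 0\<close> by (simp add: gen_def c'_def)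
      qed
      thus ?thesis by simp
    qed
    show ?thesis using h(2) by (simp add: sum_divide_distrib trm)
  qed
  show ?thesis unfolding separable_def
    by (rule exI[of _ k], rule exI[of _ c'], rule exI[of _ R], rule exI[of _ S])
       (use c'0 dR dS c'sum entry in auto)
qed



definition chi :: "nat \<Rightarrow> nat \<Rightarrow> complex" where "chi i x = (if x = i then 1 else 0)"

definition elap :: "nat \<Rightarrow> nat \<Rightarrow> nat \<Rightarrow> nat \<Rightarrow> complex" where
  "elap i j x y = (chi i x - chi j x) * (chi i y - chi j y)"

lemma cnj_chi[simp]: "cnj (chi i x) = chi i x" by (simp add: chi_def)

lemma chi_prod: assumes "q > 0" "b < q" shows "chi a (x div q) * chi b (x mod q) = chi (a*q+b) x"
proof -
  have "x = (x div q)*q + x mod q" by simp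
  hence "(x = a*q+b) \<longleftrightarrow> (x div q = a \<and> x mod q = b)" using assms by (metis idx_inj mod_less_divisor)
  thus ?thesis by (auto simp: chi_def)
qed

definition zk :: "nat \<Rightarrow> nat \<Rightarrow> complex" where "zk m k = cis (2*pi*real k/real m)"

lemma zk_pow_m: "m > 0 \<Longrightarrow> zk m k ^ m = 1"
proof -
  assume "m > 0"
  have "zk m k ^ m = cis (2*pi*of_int (int k))" using \<open>m>0\<close> by (simp add: zk_def DeMoivre)
  thus ?thesis by (metis cis_multiple_2pi Ints_of_int)
qed

lemma zk_cnj: "zk m k * cnj (zk m k) = 1"
  by (simp add: zk_def cis_cnj cis_mult)

lemma zk_arg: assumes "(m::nat) > 0" shows "real t * (2*pi*real k/m) + real s * (-(2*pi*real k/m)) = 2*pi*real k*real_of_int (int t - int s)/m"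
proof -
  have "real t * (2*pi*real k/m) + real s * (-(2*pi*real k/m)) = (real t - real s) * (2*pi*real k) / m"
    using assms by (simp add: field_simps)
  also have "... = 2*pi*real k*real_of_int (int t - int s)/m" by (simp add: mult.commute)
  finally show ?thesis .
qed

lemma dvd_small: assumes "t < (m::nat)" "s < m" "int m dvd (int t - int s)" shows "t = s"
proof (rule ccontr)
  assume "t \<noteq> s"
  hence "int t - int s \<noteq> 0" by simp
  from dvd_imp_le_int[OF this assms(3)] have "\<bar>int m\<bar> \<le> \<bar>int t - int s\<bar>" .
  moreover have "\<bar>int t - int s\<bar> < int m" using assms by auto
  ultimately show False by simp
qed

lemma avg_zk: assumes "t < m" "s < m"
  shows "(\<Sum>k<m. zk m k ^ t * cnj (zk m k) ^ s) = (if t = s then of_nat m else 0)"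
proof -
  have m0: "m > 0" using assms by simp
  have "zk m k ^ t * cnj (zk m k) ^ s = cis (2*pi*real k*real_of_int (int t - int s)/m)" for k
  proof -
    have "zk m k ^ t * cnj (zk m k) ^ s = cis (real t * (2*pi*real k/m)) * cis (real s * (-(2*pi*real k/m)))"
      by (simp add: zk_def DeMoivre cis_cnj)
    also have "... = cis (real t * (2*pi*real k/m) + real s * (-(2*pi*real k/m)))" by (simp add: cis_mult)
    also have "... = cis (2*pi*real k*real_of_int (int t - int s)/m)"
      by (simp only: zk_arg[OF m0])
    finally show ?thesis .
  qed
  hence "(\<Sum>k<m. zk m k ^ t * cnj (zk m k) ^ s) = (if int m dvd (int t - int s) then of_nat m else 0)"
    using cis_sum[OF m0, of "int t - int s"] by simp
  moreover have "int m dvd (int t - int s) \<longleftrightarrow> t = s"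
    using dvd_small[OF assms] by auto
  ultimately show ?thesis by simp
qed



lemma sum_rot: assumes "(m::nat) > 0" shows "(\<Sum>t<m. f ((t+1) mod m)) = (\<Sum>t<m. f t)"
proof -
  obtain m' where m: "m = Suc m'" using assms by (cases m) auto
  have "(\<Sum>t<m. f ((t+1) mod m)) = f ((m'+1) mod m) + (\<Sum>t<m'. f ((t+1) mod m))"
    by (simp add: m add.commute)
  also have "... = f 0 + (\<Sum>t<m'. f (Suc t))"
    by (simp add: m)
  also have "... = (\<Sum>t<m. f t)" by (simp only: m sum.lessThan_Suc_shift)
  finally show ?thesis .
qed

lemma zk_shift: assumes "t < m" shows "zk m k ^ t = cnj (zk m k) * zk m k ^ ((t+1) mod m)"
proof -
  have m0: "m > 0" using assms by simp
  have "zk m k ^ ((t+1) mod m) = zk m k ^ (t+1)"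
  proof (cases "t + 1 < m")
    case True thus ?thesis by simp
  next
    case False
    hence "t + 1 = m" using assms by simp
    thus ?thesis using zk_pow_m[OF m0] by simp
  qed
  hence "cnj (zk m k) * zk m k ^ ((t+1) mod m) = (zk m k * cnj (zk m k)) * zk m k ^ t" by (simp add: mult_ac)
  thus ?thesis by (simp add: zk_cnj)
qed

lemma triple_swap:
  fixes A :: "'k \<Rightarrow> 't \<Rightarrow> 's \<Rightarrow> 'a::comm_ring_1"
  shows "(\<Sum>k\<in>K. c * (\<Sum>t\<in>T. \<Sum>s\<in>S. A k t s * B t s)) = (\<Sum>t\<in>T. \<Sum>s\<in>S. B t s * (c * (\<Sum>k\<in>K. A k t s)))"
proof -
  have "(\<Sum>k\<in>K. c * (\<Sum>t\<in>T. \<Sum>s\<in>S. A k t s * B t s)) = (\<Sum>k\<in>K. \<Sum>t\<in>T. \<Sum>s\<in>S. B t s * (c * A k t s))"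
    by (simp add: sum_distrib_left mult_ac)
  also have "... = (\<Sum>t\<in>T. \<Sum>k\<in>K. \<Sum>s\<in>S. B t s * (c * A k t s))" by (rule sum.swap)
  also have "... = (\<Sum>t\<in>T. \<Sum>s\<in>S. \<Sum>k\<in>K. B t s * (c * A k t s))" by (intro sum.cong refl sum.swap)
  also have "... = (\<Sum>t\<in>T. \<Sum>s\<in>S. B t s * (c * (\<Sum>k\<in>K. A k t s)))" by (simp add: sum_distrib_left)
  finally show ?thesis .
qed

lemma cycle_cone:
  assumes "cs \<noteq> []" "set cs \<subseteq> {..<q}"
  shows "cone q (\<lambda>x y. \<Sum>t<length cs. elap (a*q + cs!t) (c*q + cs!((t+1) mod length cs)) x y)"
proof -
  define m where "m = length cs"
  have m0: "m > 0" using assms(1) by (simp add: m_def)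
  have q0: "q > 0" using assms by (cases cs) auto
  have csq: "cs!t < q" if "t < m" for t using assms(2) that nth_mem unfolding m_def by blast
  define v where "v t x = chi (a*q+cs!t) x - chi (c*q + cs!((t+1) mod m)) x" for t x
  define u where "u k i = chi a i - cnj (zk m k) * chi c i" for k i
  define w where "w k b = (\<Sum>t<m. zk m k ^ t * chi (cs!t) b)" for k b
  have U: "u k (x div q) * w k (x mod q) = (\<Sum>t<m. zk m k ^ t * v t x)" for k x
  proof -
    let ?z = "zk m k"
    have s1: "u k (x div q) * w k (x mod q) = (\<Sum>t<m. ?z ^ t * (chi a (x div q) * chi (cs!t) (x mod q))
         - cnj ?z * (?z ^ t * (chi c (x div q) * chi (cs!t) (x mod q))))"
      unfolding u_def w_def sum_distrib_left by (intro sum.cong refl) (simp add: algebra_simps)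
    have s2: "?z ^ t * (chi a (x div q) * chi (cs!t) (x mod q)) = ?z ^ t * chi (a*q+cs!t) x" if "t \<in> {..<m}" for t
      using chi_prod[OF q0 csq, of t a x] that by simp
    have s3: "cnj ?z * (?z ^ t * (chi c (x div q) * chi (cs!t) (x mod q))) = cnj ?z * ?z ^ t * chi (c*q+cs!t) x" if "t \<in> {..<m}" for t
      using chi_prod[OF q0 csq, of t c x] that by simp
    have s4: "(\<Sum>t<m. cnj ?z * ?z ^ t * chi (c*q+cs!t) x) = (\<Sum>t<m. cnj ?z * ?z ^ ((t+1) mod m) * chi (c*q+cs!((t+1) mod m)) x)"
      by (rule sum_rot[OF m0, of "\<lambda>s. cnj ?z * ?z ^ s * chi (c*q+cs!s) x", symmetric])
    have s5: "(\<Sum>t<m. cnj ?z * ?z ^ ((t+1) mod m) * chi (c*q+cs!((t+1) mod m)) x) = (\<Sum>t<m. ?z ^ t * chi (c*q+cs!((t+1) mod m)) x)"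
    proof (intro sum.cong refl)
      fix t assume "t \<in> {..<m}"
      hence "t < m" by simp
      hence "?z ^ t = cnj ?z * ?z ^ ((t+1) mod m)" by (rule zk_shift)
      hence "cnj ?z * ?z ^ ((t+1) mod m) = ?z ^ t" by (rule sym)
      thus "cnj ?z * ?z ^ ((t+1) mod m) * chi (c*q+cs!((t+1) mod m)) x = ?z ^ t * chi (c*q+cs!((t+1) mod m)) x" by simp
    qed
    have "u k (x div q) * w k (x mod q) = (\<Sum>t<m. ?z ^ t * chi (a*q+cs!t) x - cnj ?z * ?z ^ t * chi (c*q+cs!t) x)"
      unfolding s1 by (intro sum.cong refl) (simp only: s2 s3)
    also have "... = (\<Sum>t<m. ?z ^ t * chi (a*q+cs!t) x) - (\<Sum>t<m. cnj ?z * ?z ^ t * chi (c*q+cs!t) x)"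
      by (rule sum_subtractf)
    also have "... = (\<Sum>t<m. ?z ^ t * chi (a*q+cs!t) x) - (\<Sum>t<m. ?z ^ t * chi (c*q+cs!((t+1) mod m)) x)"
      by (simp only: s4 s5)
    also have "... = (\<Sum>t<m. ?z ^ t * chi (a*q+cs!t) x - ?z ^ t * chi (c*q+cs!((t+1) mod m)) x)"
      by (rule sum_subtractf[symmetric])
    also have "... = (\<Sum>t<m. ?z ^ t * v t x)"
      unfolding v_def by (simp only: right_diff_distrib)
    finally show ?thesis .
  qed
  have cv: "cnj (v t x) = v t x" for t x by (simp add: v_def)
  have G: "gen q (1/m) (u k) (w k) x y = of_real (1/m) * ((u k (x div q) * w k (x mod q)) * cnj (u k (y div q) * w k (y mod q)))" for k x y
    by (simp add: gen_def mult_ac)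
  have UU: "(u k (x div q) * w k (x mod q)) * cnj (u k (y div q) * w k (y mod q))
      = (\<Sum>t<m. \<Sum>s<m. (zk m k ^ t * cnj (zk m k) ^ s) * (v t x * v s y))" for k x y
  proof -
    have "(u k (x div q) * w k (x mod q)) * cnj (u k (y div q) * w k (y mod q))
        = (\<Sum>t<m. zk m k ^ t * v t x) * (\<Sum>s<m. cnj (zk m k) ^ s * v s y)"
      by (simp add: U cv)
    also have "... = (\<Sum>t<m. \<Sum>s<m. (zk m k ^ t * v t x) * (cnj (zk m k) ^ s * v s y))"
      by (rule sum_product)
    also have "... = (\<Sum>t<m. \<Sum>s<m. (zk m k ^ t * cnj (zk m k) ^ s) * (v t x * v s y))"
      by (simp add: mult_ac)
    finally show ?thesis .
  qed
  have main: "(\<Sum>k<m. gen q (1/m) (u k) (w k) x y) = (\<Sum>t<m. v t x * v t y)" for x y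
  proof -
    have "(\<Sum>k<m. gen q (1/m) (u k) (w k) x y)
        = (\<Sum>k<m. of_real (1/m) * (\<Sum>t<m. \<Sum>s<m. (zk m k ^ t * cnj (zk m k) ^ s) * (v t x * v s y)))"
      by (simp only: G UU)
    also have "... = (\<Sum>t<m. \<Sum>s<m. (v t x * v s y) * (of_real (1/m) * (\<Sum>k<m. zk m k ^ t * cnj (zk m k) ^ s)))"
      by (rule triple_swap)
    also have "... = (\<Sum>t<m. \<Sum>s<m. (if t = s then v t x * v s y else 0))"
      using m0 by (intro sum.cong refl) (simp add: avg_zk)
    also have "... = (\<Sum>t<m. v t x * v t y)" by simp
    finally show ?thesis .
  qed
  have "cone q (\<lambda>x y. \<Sum>k<m. gen q (1/m) (u k) (w k) x y)"
    by (rule cone_sum) (auto intro: cone_gen)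
  moreover have "(\<lambda>x y. \<Sum>k<m. gen q (1/m) (u k) (w k) x y) = (\<lambda>x y. \<Sum>t<m. elap (a*q + cs!t) (c*q + cs!((t+1) mod m)) x y)"
    by (intro ext) (simp add: main elap_def v_def)
  ultimately show ?thesis by (simp add: m_def)
qed



definition esum :: "nat set \<Rightarrow> nat \<Rightarrow> nat \<Rightarrow> complex" where
  "esum e x y = (if x \<in> e \<and> y \<in> e then (if x = y then 1 else -1) else 0)"

lemma all_edges_sub: "all_edges n \<subseteq> Pow {..<n}"
  unfolding all_edges_def by auto

lemma finite_all_edges: "finite (all_edges n)"
  using all_edges_sub by (rule finite_subset) simp

lemma edge_form: "e \<in> all_edges n \<Longrightarrow> \<exists>i j. e = {i,j} \<and> i \<noteq> j \<and> i < n \<and> j < n"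
  unfolding all_edges_def by auto

lemma esum_elap: "i \<noteq> j \<Longrightarrow> esum {i,j} x y = elap i j x y"
  by (auto simp: esum_def elap_def chi_def)

lemma lap_decomp:
  assumes "E \<subseteq> all_edges n"
  shows "laplacian E x y = (\<Sum>e\<in>E. esum e x y)"
proof -
  have fin: "finite E" using assms finite_all_edges finite_subset by blast
  show ?thesis
  proof (cases "x = y")
    case True
    have nx: "{x} \<notin> E" using assms unfolding all_edges_def by (auto simp: doubleton_eq_iff)
    have "(\<Sum>e\<in>E. esum e x y) = (\<Sum>e\<in>E. if x \<in> e then 1 else 0)"
      using True by (intro sum.cong) (auto simp: esum_def)
    also have "... = of_nat (card {e\<in>E. x \<in> e})"
      using fin by (simp add: sum.If_cases Int_def Collect_conj_eq[symmetric] conj_commute)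
    also have "card {e\<in>E. x \<in> e} = card {j. {x, j} \<in> E}"
    proof -
      have "bij_betw (\<lambda>j. {x,j}) {j. {x, j} \<in> E} {e\<in>E. x \<in> e}"
      proof (rule bij_betw_imageI)
        show "inj_on (\<lambda>j. {x,j}) {j. {x, j} \<in> E}"
          by (auto simp: inj_on_def doubleton_eq_iff)
        show "(\<lambda>j. {x,j}) ` {j. {x, j} \<in> E} = {e\<in>E. x \<in> e}"
        proof
          show "(\<lambda>j. {x,j}) ` {j. {x, j} \<in> E} \<subseteq> {e\<in>E. x \<in> e}" by auto
          show "{e\<in>E. x \<in> e} \<subseteq> (\<lambda>j. {x,j}) ` {j. {x, j} \<in> E}"
          proof
            fix e assume e: "e \<in> {e\<in>E. x \<in> e}"
            then obtain i j where "e = {i,j}" using assms edge_form by blast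
            with e have "e = {x, if x = i then j else i}" by auto
            thus "e \<in> (\<lambda>j. {x,j}) ` {j. {x, j} \<in> E}" using e by auto
          qed
        qed
      qed
      thus ?thesis by (simp add: bij_betw_same_card)
    qed
    finally show ?thesis using True nx by (simp add: laplacian_def adjacency_def degree_def)
  next
    case False
    have "(\<Sum>e\<in>E. esum e x y) = (\<Sum>e\<in>E. if e = {x,y} then -1 else 0)"
    proof (intro sum.cong refl)
      fix e assume "e \<in> E"
      then obtain i j where "e = {i,j}" using assms edge_form by blast
      thus "esum e x y = (if e = {x,y} then -1 else 0)" using False by (auto simp: esum_def)
    qed
    also have "... = (if {x,y} \<in> E then -1 else 0)"
      using fin by (simp add: sum.delta')
    finally show ?thesis using False by (simp add: laplacian_def adjacency_def)
  qed
qed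



definition balanced :: "(nat \<times> nat) set \<Rightarrow> bool" where
  "balanced A \<longleftrightarrow> (\<forall>v. card {e\<in>A. fst e = v} = card {e\<in>A. snd e = v})"

definition arcf :: "nat list \<Rightarrow> nat \<Rightarrow> nat \<times> nat" where
  "arcf cs t = (cs!t, cs!((t+1) mod length cs))"

definition cyc_arcs :: "nat list \<Rightarrow> (nat \<times> nat) set" where
  "cyc_arcs cs = arcf cs ` {..<length cs}"

lemma card_filter_sum: "finite S \<Longrightarrow> card {t\<in>S. P t} = (\<Sum>t\<in>S. if P t then 1 else 0)"
  by (simp add: sum.If_cases Int_def Collect_conj_eq[symmetric] conj_commute)

lemma inj_arcf: "distinct cs \<Longrightarrow> inj_on (arcf cs) {..<length cs}"
  unfolding inj_on_def arcf_def by (auto simp: nth_eq_iff_index_eq)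

lemma cyc_deg:
  assumes "distinct cs" "cs \<noteq> []"
  shows "card {e\<in>cyc_arcs cs. fst e = v} = card {e\<in>cyc_arcs cs. snd e = v}"
proof -
  let ?m = "length cs"
  have m0: "?m > 0" using assms by simp
  have inj: "inj_on (arcf cs) S" if "S \<subseteq> {..<?m}" for S using inj_arcf[OF assms(1)] that inj_on_subset by blast
  have e1: "{e\<in>cyc_arcs cs. fst e = v} = arcf cs ` {t\<in>{..<?m}. cs!t = v}"
    unfolding cyc_arcs_def arcf_def by auto
  have e2: "{e\<in>cyc_arcs cs. snd e = v} = arcf cs ` {t\<in>{..<?m}. cs!((t+1) mod ?m) = v}"
    unfolding cyc_arcs_def arcf_def by auto
  have i1: "inj_on (arcf cs) {t\<in>{..<?m}. cs!t = v}" by (rule inj) auto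
  have i2: "inj_on (arcf cs) {t\<in>{..<?m}. cs!((t+1) mod ?m) = v}" by (rule inj) auto
  have "card {e\<in>cyc_arcs cs. fst e = v} = card {t\<in>{..<?m}. cs!t = v}"
    unfolding e1 by (rule card_image[OF i1])
  also have "... = (\<Sum>t<?m. if cs!t = v then 1 else 0)" by (rule card_filter_sum) simp
  also have "... = (\<Sum>t<?m. if cs!((t+1) mod ?m) = v then 1 else 0)"
    by (rule sum_rot[OF m0, symmetric])
  also have "... = card {t\<in>{..<?m}. cs!((t+1) mod ?m) = v}" by (rule card_filter_sum[symmetric]) simp
  also have "... = card {e\<in>cyc_arcs cs. snd e = v}"
    unfolding e2 by (rule card_image[OF i2, symmetric])
  finally show ?thesis .
qed

lemma balanced_diff:
  assumes "finite A" "balanced A" "distinct cs" "cs \<noteq> []" "cyc_arcs cs \<subseteq> A"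
  shows "balanced (A - cyc_arcs cs)"
  unfolding balanced_def
proof
  fix v
  let ?C = "cyc_arcs cs"
  have f1: "{e\<in>A - ?C. fst e = v} = {e\<in>A. fst e = v} - {e\<in>?C. fst e = v}" by auto
  have f2: "{e\<in>A - ?C. snd e = v} = {e\<in>A. snd e = v} - {e\<in>?C. snd e = v}" by auto
  have "card {e\<in>A - ?C. fst e = v} = card {e\<in>A. fst e = v} - card {e\<in>?C. fst e = v}"
    unfolding f1 using assms(1,5) by (intro card_Diff_subset) (auto intro: finite_subset)
  also have "... = card {e\<in>A. snd e = v} - card {e\<in>?C. snd e = v}"
    using assms(2) cyc_deg[OF assms(3,4)] unfolding balanced_def by simp
  also have "... = card {e\<in>A - ?C. snd e = v}"
    unfolding f2 using assms(1,5) by (intro card_Diff_subset[symmetric]) (auto intro: finite_subset)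
  finally show "card {e\<in>A - ?C. fst e = v} = card {e\<in>A - ?C. snd e = v}" .
qed



lemma cycle_exists:
  assumes "finite A" "balanced A" "A \<noteq> {}"
  shows "\<exists>cs. cs \<noteq> [] \<and> distinct cs \<and> cyc_arcs cs \<subseteq> A"
proof -
  obtain b0 d0 where bd: "(b0, d0) \<in> A" using assms(3) by auto
  have outex: "\<exists>d. (v, d) \<in> A" if "\<exists>b. (b, v) \<in> A" for v
  proof -
    from that obtain b where "(b,v) \<in> A" by blast
    hence "{e\<in>A. snd e = v} \<noteq> {}" by auto
    moreover have "finite {e\<in>A. snd e = v}" using assms(1) by simp
    ultimately have "card {e\<in>A. snd e = v} > 0" by (simp add: card_gt_0_iff)
    hence "card {e\<in>A. fst e = v} > 0" using assms(2) unfolding balanced_def by simp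
    hence "{e\<in>A. fst e = v} \<noteq> {}" by (metis card.empty less_irrefl)
    thus ?thesis by auto
  qed
  define s where "s v = (SOME d. (v, d) \<in> A)" for v
  define f where "f n = (s ^^ n) d0" for n
  have fS: "f (Suc n) = s (f n)" for n by (simp add: f_def)
  have inarc: "\<exists>b. (b, f n) \<in> A" for n
  proof (induction n)
    case 0 thus ?case using bd by (auto simp: f_def)
  next
    case (Suc n)
    from outex[OF Suc] have "(f n, s (f n)) \<in> A" unfolding s_def by (rule someI_ex)
    thus ?case by (auto simp: fS)
  qed
  have arc: "(f n, f (Suc n)) \<in> A" for n
    using outex[OF inarc[of n]] unfolding fS s_def by (rule someI_ex)
  define N where "N = card (snd ` A)"
  have img: "f ` {..N} \<subseteq> snd ` A" using inarc by force
  have "\<not> inj_on f {..N}"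
  proof
    assume "inj_on f {..N}"
    hence "card (f ` {..N}) = Suc N" by (simp add: card_image)
    moreover have "card (f ` {..N}) \<le> N" using card_mono[OF finite_imageI[OF assms(1)] img] unfolding N_def by simp
    ultimately show False by simp
  qed
  then obtain i0 j0 where ij0: "i0 \<noteq> j0" "f i0 = f j0" unfolding inj_on_def by blast
  have exP: "\<exists>j. \<exists>i<j. f i = f j"
  proof (cases "i0 < j0")
    case True thus ?thesis using ij0 by blast
  next
    case False thus ?thesis using ij0 by (metis linorder_neqE_nat)
  qed
  define J where "J = (LEAST j. \<exists>i<j. f i = f j)"
  have PJ: "\<exists>i<J. f i = f J" unfolding J_def by (rule LeastI_ex[OF exP])
  have minJ: "\<not> (\<exists>i<j. f i = f j)" if "j < J" for j
    using not_less_Least[of j "\<lambda>j. \<exists>i<j. f i = f j"] that unfolding J_def by blast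
  obtain i where i: "i < J" "f i = f J" using PJ by blast
  define m where "m = J - i"
  define cs where "cs = map (\<lambda>t. f (i + t)) [0..<m]"
  have len: "length cs = m" by (simp add: cs_def)
  have m0: "m > 0" using i by (simp add: m_def)
  have nth: "cs ! t = f (i + t)" if "t < m" for t using that by (simp add: cs_def)
  have "distinct cs"
  proof -
    have "f (i + t) \<noteq> f (i + t')" if "t < t'" "t' < m" for t t'
      using minJ[of "i + t'"] that unfolding m_def by auto
    hence "inj_on (\<lambda>t. f (i + t)) {0..<m}" unfolding inj_on_def by (metis atLeastLessThan_iff linorder_neqE_nat)
    thus ?thesis by (simp add: cs_def distinct_map)
  qed
  moreover have "cs \<noteq> []" using m0 len by auto
  moreover have "cyc_arcs cs \<subseteq> A"
  proof
    fix e assume "e \<in> cyc_arcs cs"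
    then obtain t where t: "t < m" "e = arcf cs t" unfolding cyc_arcs_def len by auto
    show "e \<in> A"
    proof (cases "t + 1 < m")
      case True
      hence "e = (f (i+t), f (Suc (i+t)))" using t nth len by (simp add: arcf_def)
      thus ?thesis using arc by simp
    next
      case False
      hence "t + 1 = m" using t by simp
      hence "e = (f (i+t), f i)" using t nth len m0 by (simp add: arcf_def)
      also have "Suc (i+t) = J" using i \<open>t+1 = m\<close> unfolding m_def by simp
      hence "f i = f (Suc (i+t))" using i by simp
      finally show ?thesis using arc by simp
    qed
  qed
  ultimately show ?thesis by blast
qed



lemma arc_cone:
  assumes "finite A" "balanced A" "A \<subseteq> {..<q} \<times> {..<q}"
  shows "cone q (\<lambda>x y. \<Sum>e\<in>A. elap (a*q + fst e) (c*q + snd e) x y)"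
  using assms
proof (induction "card A" arbitrary: A rule: less_induct)
  case less
  show ?case
  proof (cases "A = {}")
    case True thus ?thesis by (simp add: cone.zero)
  next
    case False
    then obtain cs where cs: "cs \<noteq> []" "distinct cs" "cyc_arcs cs \<subseteq> A"
      using cycle_exists[OF less.prems(1,2)] by blast
    let ?C = "cyc_arcs cs"
    let ?g = "\<lambda>x y e. elap (a*q + fst e) (c*q + snd e) x y"
    have Cne: "?C \<noteq> {}" using cs(1) unfolding cyc_arcs_def by auto
    have lt: "card (A - ?C) < card A"
    proof -
      have "A - ?C \<subset> A" using cs(3) Cne by auto
      thus ?thesis using less.prems(1) by (rule psubset_card_mono[rotated])
    qed
    have IH: "cone q (\<lambda>x y. \<Sum>e\<in>A - ?C. ?g x y e)"
      using less.hyps[OF lt] less.prems balanced_diff[OF less.prems(1,2) cs(2,1,3)] by auto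
    have setq: "set cs \<subseteq> {..<q}"
    proof
      fix v assume "v \<in> set cs"
      then obtain t where t: "t < length cs" "cs!t = v" by (auto simp: in_set_conv_nth)
      hence "arcf cs t \<in> A" using cs(3) unfolding cyc_arcs_def by auto
      thus "v \<in> {..<q}" using less.prems(3) t by (auto simp: arcf_def)
    qed
    have Csum: "(\<Sum>e\<in>?C. ?g x y e) = (\<Sum>t<length cs. elap (a*q + cs!t) (c*q + cs!((t+1) mod length cs)) x y)" for x y
      unfolding cyc_arcs_def by (subst sum.reindex[OF inj_arcf[OF cs(2)]]) (simp add: arcf_def)
    have CC: "cone q (\<lambda>x y. \<Sum>e\<in>?C. ?g x y e)"
      unfolding Csum by (rule cycle_cone[OF cs(1) setq])
    have split: "(\<Sum>e\<in>A. ?g x y e) = (\<Sum>e\<in>A - ?C. ?g x y e) + (\<Sum>e\<in>?C. ?g x y e)" for x y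
      by (rule sum.subset_diff[OF cs(3) less.prems(1)])
    show ?thesis unfolding split by (rule cone_add[OF CC IH])
  qed
qed



definition blockM :: "nat \<Rightarrow> nat set set \<Rightarrow> nat \<Rightarrow> nat \<Rightarrow> nat \<Rightarrow> nat \<Rightarrow> nat" where
  "blockM q E a c b d = (if b < q \<and> d < q \<and> {a*q+b, c*q+d} \<in> E then 1 else 0)"

definition goodG :: "nat \<Rightarrow> nat \<Rightarrow> nat set set \<Rightarrow> bool" where
  "goodG p q E \<longleftrightarrow> E \<in> graphs (p*q) \<and> (\<forall>a c. a < c \<and> c < p \<longrightarrow> line_sum_symmetric q (blockM q E a c))"

lemma chi_split: "q > 0 \<Longrightarrow> chi i x = chi (i div q) (x div q) * chi (i mod q) (x mod q)"
  using chi_prod[of q "i mod q" "i div q" x] by simp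

lemma intra_gen:
  assumes "q > 0" "i div q = j div q"
  shows "elap i j = gen q 1 (chi (i div q)) (\<lambda>b. chi (i mod q) b - chi (j mod q) b)"
proof (intro ext)
  fix x y
  show "elap i j x y = gen q 1 (chi (i div q)) (\<lambda>b. chi (i mod q) b - chi (j mod q) b) x y"
    unfolding elap_def gen_def
    by (simp add: chi_split[OF assms(1), of i] chi_split[OF assms(1), of j] assms(2) algebra_simps)
qed

lemma lss_balanced:
  assumes "line_sum_symmetric q (blockM q E a c)"
  shows "balanced {e. fst e < q \<and> snd e < q \<and> {a*q + fst e, c*q + snd e} \<in> E}" (is "balanced ?A")
  unfolding balanced_def
proof
  fix v
  show "card {e\<in>?A. fst e = v} = card {e\<in>?A. snd e = v}"
  proof (cases "v < q")
    case False
    hence e1: "{e\<in>?A. fst e = v} = {}" and e2: "{e\<in>?A. snd e = v} = {}" by auto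
    show ?thesis by (simp only: e1 e2)
  next
    case True
    have o: "{e\<in>?A. fst e = v} = (\<lambda>d. (v,d)) ` {d\<in>{..<q}. {a*q+v, c*q+d} \<in> E}" using True by auto
    have i: "{e\<in>?A. snd e = v} = (\<lambda>b. (b,v)) ` {b\<in>{..<q}. {a*q+b, c*q+v} \<in> E}" using True by auto
    have "card {e\<in>?A. fst e = v} = card {d\<in>{..<q}. {a*q+v, c*q+d} \<in> E}"
      unfolding o by (rule card_image) (auto simp: inj_on_def)
    also have "... = (\<Sum>d<q. if {a*q+v, c*q+d} \<in> E then 1 else 0)" by (rule card_filter_sum) simp
    also have "... = (\<Sum>d<q. blockM q E a c v d)"
      using True by (intro sum.cong) (auto simp: blockM_def)
    also have "... = (\<Sum>d<q. blockM q E a c d v)"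
      using assms True unfolding line_sum_symmetric_def by simp
    also have "... = (\<Sum>b<q. if {a*q+b, c*q+v} \<in> E then 1 else 0)"
      using True by (intro sum.cong) (auto simp: blockM_def)
    also have "... = card {b\<in>{..<q}. {a*q+b, c*q+v} \<in> E}" by (rule card_filter_sum[symmetric]) simp
    also have "... = card {e\<in>?A. snd e = v}"
      unfolding i by (rule card_image[symmetric]) (auto simp: inj_on_def)
    finally show ?thesis .
  qed
qed



lemma good_cone:
  assumes "goodG p q E" "q \<ge> 1"
  shows "cone q (laplacian E)"
proof -
  let ?n = "p*q"
  have q0: "q > 0" using assms(2) by simp
  have Esub: "E \<subseteq> all_edges ?n" using assms(1) unfolding goodG_def graphs_def by auto
  have fin: "finite E" using Esub finite_all_edges finite_subset by blast
  have lss: "line_sum_symmetric q (blockM q E a c)" if "a < c" "c < p" for a c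
    using assms(1) that unfolding goodG_def by blast
  define blk where "blk e = (\<lambda>i. i div q) ` e" for e :: "nat set"
  have L: "laplacian E = (\<lambda>x y. \<Sum>P\<in>blk ` E. \<Sum>e\<in>{e\<in>E. blk e = P}. esum e x y)"
  proof (intro ext)
    fix x y
    have "laplacian E x y = (\<Sum>e\<in>E. esum e x y)" by (rule lap_decomp[OF Esub])
    also have "... = (\<Sum>P\<in>blk ` E. \<Sum>e\<in>{e\<in>E. blk e = P}. esum e x y)"
      by (rule sum.group[symmetric]) (use fin in auto)
    finally show "laplacian E x y = (\<Sum>P\<in>blk ` E. \<Sum>e\<in>{e\<in>E. blk e = P}. esum e x y)" .
  qed
  have grp: "cone q (\<lambda>x y. \<Sum>e\<in>{e\<in>E. blk e = P}. esum e x y)" if P: "P \<in> blk ` E" for P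
  proof -
    obtain e0 where e0: "e0 \<in> E" "P = blk e0" using P by blast
    obtain i j where ij: "e0 = {i,j}" "i \<noteq> j" "i < ?n" "j < ?n" using edge_form e0(1) Esub by blast
    have ip: "i div q < p" "j div q < p" using ij q0 by (auto simp: less_mult_imp_div_less)
    have finG: "finite {e\<in>E. blk e = P}" using fin by simp
    show ?thesis
    proof (cases "i div q = j div q")
      case True
      let ?a = "i div q"
      have PA: "P = {?a}" using e0 ij True by (auto simp: blk_def)
      show ?thesis
      proof (rule cone_sum[OF finG])
        fix e assume e: "e \<in> {e\<in>E. blk e = P}"
        then obtain i' j' where ij': "e = {i',j'}" "i' \<noteq> j'" using edge_form Esub by blast
        have "i' div q = j' div q" using e ij' PA by (auto simp: blk_def)
        have "esum e = elap i' j'" using ij' by (intro ext) (simp add: esum_elap)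
        also have "... = gen q 1 (chi (i' div q)) (\<lambda>b. chi (i' mod q) b - chi (j' mod q) b)"
          by (rule intra_gen[OF q0 \<open>i' div q = j' div q\<close>])
        finally show "cone q (esum e)" by (simp add: cone_gen)
      qed
    next
      case False
      define a where "a = min (i div q) (j div q)"
      define c where "c = max (i div q) (j div q)"
      have ac: "a < c" "c < p" using False ip unfolding a_def c_def by auto
      have PA: "P = {a, c}" using e0 ij unfolding a_def c_def blk_def by (auto simp: min_def max_def)
      define A where "A = {e. fst e < q \<and> snd e < q \<and> {a*q + fst e, c*q + snd e} \<in> E}"
      define h where "h e = {a*q + fst e, c*q + snd e}" for e :: "nat \<times> nat"
      have Asub: "A \<subseteq> {..<q} \<times> {..<q}" unfolding A_def by auto
      have finA: "finite A" using Asub by (rule finite_subset) simp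
      have balA: "balanced A" unfolding A_def by (rule lss_balanced[OF lss[OF ac]])
      have neq: "a*q + b \<noteq> c*q + d" if "b < q" "d < q" for b d
        using ac that by (metis idx_inj less_irrefl)
      have injh: "inj_on h A"
      proof
        fix e e' assume ee: "e \<in> A" "e' \<in> A" "h e = h e'"
        have "a*q + fst e \<in> h e'" using ee(3) unfolding h_def by auto
        hence "a*q + fst e = a*q + fst e'" using neq[of "fst e" "snd e'"] ee unfolding h_def A_def by auto
        moreover have "c*q + snd e \<in> h e'" using ee(3) unfolding h_def by auto
        hence "c*q + snd e = c*q + snd e'" using neq[of "fst e'" "snd e"] ee unfolding h_def A_def by auto
        ultimately show "e = e'" by (simp add: prod_eq_iff)
      qed
      have GA: "{e\<in>E. blk e = P} = h ` A"
      proof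
        show "h ` A \<subseteq> {e\<in>E. blk e = P}"
          unfolding A_def h_def PA blk_def by auto
        show "{e\<in>E. blk e = P} \<subseteq> h ` A"
        proof
          fix e assume e: "e \<in> {e\<in>E. blk e = P}"
          then obtain i' j' where ij': "e = {i',j'}" "i' \<noteq> j'" using edge_form Esub by blast
          have bl: "{i' div q, j' div q} = {a, c}" using e ij' PA by (auto simp: blk_def)
          have di: "i' = (i' div q)*q + i' mod q" "j' = (j' div q)*q + j' mod q" by simp_all
          have mq: "i' mod q < q" "j' mod q < q" using q0 by auto
          show "e \<in> h ` A"
          proof (cases "i' div q = a")
            case True
            hence "j' div q = c" using bl ac by (auto simp: doubleton_eq_iff)
            hence "e = h (i' mod q, j' mod q)" using True di ij' unfolding h_def by simp
            moreover have "(i' mod q, j' mod q) \<in> A" using \<open>e = h _\<close> e mq unfolding A_def h_def by auto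
            ultimately show ?thesis by blast
          next
            case False
            hence "i' div q = c" "j' div q = a" using bl ac by (auto simp: doubleton_eq_iff)
            hence "e = h (j' mod q, i' mod q)" using di ij' unfolding h_def by (simp add: insert_commute)
            moreover have "(j' mod q, i' mod q) \<in> A" using \<open>e = h _\<close> e mq unfolding A_def h_def by auto
            ultimately show ?thesis by blast
          qed
        qed
      qed
      have "(\<lambda>x y. \<Sum>e\<in>{e\<in>E. blk e = P}. esum e x y) = (\<lambda>x y. \<Sum>e\<in>A. elap (a*q + fst e) (c*q + snd e) x y)"
      proof (intro ext)
        fix x y
        have "(\<Sum>e\<in>{e\<in>E. blk e = P}. esum e x y) = (\<Sum>e\<in>A. esum (h e) x y)"
          unfolding GA by (rule sum.reindex[OF injh, unfolded comp_def])
        also have "... = (\<Sum>e\<in>A. elap (a*q + fst e) (c*q + snd e) x y)"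
          using neq unfolding h_def A_def by (intro sum.cong refl) (simp add: esum_elap)
        finally show "(\<Sum>e\<in>{e\<in>E. blk e = P}. esum e x y) = (\<Sum>e\<in>A. elap (a*q + fst e) (c*q + snd e) x y)" .
      qed
      thus ?thesis using arc_cone[OF finA balA Asub] by simp
    qed
  qed
  show ?thesis unfolding L by (rule cone_sum) (use fin grp in auto)
qed

lemma lap_trace:
  assumes "E \<subseteq> all_edges n"
  shows "mtrace n (laplacian E) = of_nat (2 * card E)"
proof -
  have fin: "finite E" using assms finite_all_edges finite_subset by blast
  have "mtrace n (laplacian E) = (\<Sum>x<n. \<Sum>e\<in>E. esum e x x)"
    unfolding mtrace_def using lap_decomp[OF assms] by simp
  also have "... = (\<Sum>e\<in>E. \<Sum>x<n. esum e x x)" by (rule sum.swap)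
  also have "... = (\<Sum>e\<in>E. (2::complex))"
  proof (intro sum.cong refl)
    fix e assume "e \<in> E"
    then obtain i j where ij: "e = {i,j}" "i \<noteq> j" "i < n" "j < n" using edge_form assms by blast
    have "(\<Sum>x<n. esum e x x) = (\<Sum>x<n. if x \<in> e then 1 else 0)" by (intro sum.cong) (auto simp: esum_def)
    also have "... = of_nat (card {x\<in>{..<n}. x \<in> e})"
      by (simp add: sum.If_cases Int_def Collect_conj_eq[symmetric] conj_commute)
    also have "{x\<in>{..<n}. x \<in> e} = e" using ij by auto
    finally show "(\<Sum>x<n. esum e x x) = 2" using ij by simp
  qed
  also have "... = of_nat (2 * card E)" by simp
  finally show ?thesis .
qed

lemma good_sep:
  assumes "goodG p q E" "E \<noteq> {}" "p \<ge> 1" "q \<ge> 1"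
  shows "separable p q (normalized_laplacian (p*q) E)"
proof -
  have Esub: "E \<subseteq> all_edges (p*q)" using assms(1) unfolding goodG_def graphs_def by auto
  have fin: "finite E" using Esub finite_all_edges finite_subset by blast
  let ?t = "real (2 * card E)"
  have t0: "?t > 0" using fin assms(2) by (simp add: card_gt_0_iff)
  have tr: "mtrace (p*q) (laplacian E) = of_real ?t" using lap_trace[OF Esub] by simp
  have "separable p q (\<lambda>x y. laplacian E x y / of_real ?t)"
    by (rule cone_separable[OF good_cone[OF assms(1,4)] assms(3,4) t0 tr])
  moreover have "normalized_laplacian (p*q) E = (\<lambda>x y. laplacian E x y / of_real ?t)"
    unfolding normalized_laplacian_def tr by simp
  ultimately show ?thesis by simp
qed



lemma all_edges_eq: "all_edges n = {B. B \<subseteq> {..<n} \<and> card B = 2}"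
  unfolding all_edges_def by (auto simp: card_2_iff)

lemma card_all_edges: "card (all_edges n) = n * (n - 1) div 2"
  unfolding all_edges_eq by (simp add: n_subsets choose_two)

lemma graphs_Pow: "graphs n = Pow (all_edges n)"
  unfolding graphs_def by auto

lemma card_graphs: "card (graphs n) = 2 ^ (n * (n - 1) div 2)"
  unfolding graphs_Pow by (simp add: card_Pow finite_all_edges card_all_edges)

definition LSS :: "nat \<Rightarrow> (nat \<Rightarrow> nat \<Rightarrow> nat) set" where
  "LSS q = {M \<in> zero_one_mats q. line_sum_symmetric q M}"

definition Dom :: "nat \<Rightarrow> nat \<Rightarrow> ((nat \<Rightarrow> nat set set) \<times> (nat set \<Rightarrow> nat \<Rightarrow> nat \<Rightarrow> nat)) set" where
  "Dom p q = (PiE {..<p} (\<lambda>_. graphs q)) \<times> (PiE (all_edges p) (\<lambda>_. LSS q))"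

lemma card_Dom: "card (Dom p q) = (2 ^ (q * (q - 1) div 2)) ^ p * N_s q ^ (p * (p - 1) div 2)"
  unfolding Dom_def
  by (simp add: card_cartesian_product card_PiE finite_all_edges card_graphs card_all_edges N_s_def LSS_def)

lemma arith_final:
  fixes p q :: nat
  shows "(2::int) ^ (p * q * (q - 1) div 2) = (2 ^ (q * (q - 1) div 2)) ^ p"
proof -
  have "even (q * (q - 1))" by auto
  hence "p * q * (q - 1) div 2 = (q * (q - 1) div 2) * p"
    by (metis (no_types) dvd_div_mult mult.assoc mult.commute)
  thus ?thesis by (simp add: power_mult)
qed



definition Phi :: "nat \<Rightarrow> nat \<Rightarrow> (nat \<Rightarrow> nat set set) \<times> (nat set \<Rightarrow> nat \<Rightarrow> nat \<Rightarrow> nat) \<Rightarrow> nat set set" where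
  "Phi p q GM = (\<Union>a\<in>{..<p}. (\<lambda>e. (\<lambda>b. a*q+b) ` e) ` fst GM a)
     \<union> (\<Union>P\<in>all_edges p. {{Min P * q + b, Max P * q + d} | b d. b < q \<and> d < q \<and> snd GM P b d = 1})"

lemma pair_mm: assumes "P \<in> all_edges p" shows "P = {Min P, Max P}" "Min P < Max P" "Max P < p"
proof -
  obtain i j where ij: "P = {i,j}" "i \<noteq> j" "i < p" "j < p" using edge_form[OF assms] by blast
  have "Min P = min i j" "Max P = max i j" using ij by auto
  thus "P = {Min P, Max P}" "Min P < Max P" "Max P < p" using ij by (auto simp: min_def max_def)
qed

lemma mm_pair: "a < c \<Longrightarrow> Min {a,c} = a \<and> Max {a,c} = (c::nat)" by auto

lemma ac_edge: assumes "a < c" "c < p" shows "{a,c} \<in> all_edges p"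
proof -
  have "a < p" "a \<noteq> c" using assms by auto
  thus ?thesis unfolding all_edges_def using assms by blast
qed

lemma Dom_G: assumes "GM \<in> Dom p q" "a < p" shows "fst GM a \<subseteq> all_edges q"
proof -
  have "fst GM \<in> PiE {..<p} (\<lambda>_. graphs q)" using assms(1) unfolding Dom_def by (auto simp: mem_Times_iff)
  hence "fst GM a \<in> graphs q" using assms(2) by (auto dest: PiE_mem)
  thus ?thesis unfolding graphs_def by simp
qed

lemma Dom_M: "GM \<in> Dom p q \<Longrightarrow> P \<in> all_edges p \<Longrightarrow> snd GM P \<in> LSS q"
  unfolding Dom_def by (auto simp: PiE_iff)

lemma edge_lt: "e \<in> all_edges q \<Longrightarrow> y \<in> e \<Longrightarrow> y < q"
  unfolding all_edges_def by auto

lemma Phi_cross: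
  assumes GM: "GM \<in> Dom p q" and ac: "a < c" "c < p" and bd: "b < q" "d < q"
  shows "{a*q+b, c*q+d} \<in> Phi p q GM \<longleftrightarrow> snd GM {a,c} b d = 1"
proof
  assume h: "snd GM {a,c} b d = 1"
  have "{a*q+b, c*q+d} \<in> {{Min {a,c} * q + b', Max {a,c} * q + d'} | b' d'. b' < q \<and> d' < q \<and> snd GM {a,c} b' d' = 1}"
    by (intro CollectI exI[of _ b] exI[of _ d]) (simp add: mm_pair[OF ac(1)] bd h)
  hence "{a*q+b, c*q+d} \<in> (\<Union>P\<in>all_edges p. {{Min P * q + b, Max P * q + d} | b d. b < q \<and> d < q \<and> snd GM P b d = 1})"
    using ac_edge[OF ac] by (rule UN_I[rotated])
  thus "{a*q+b, c*q+d} \<in> Phi p q GM" unfolding Phi_def by (rule UnI2)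
next
  assume mem: "{a*q+b, c*q+d} \<in> Phi p q GM"
  show "snd GM {a,c} b d = 1"
  proof (cases "{a*q+b, c*q+d} \<in> (\<Union>a\<in>{..<p}. (\<lambda>e. (\<lambda>b. a*q+b) ` e) ` fst GM a)")
    case True
    then obtain a' e' where ae: "a' < p" "e' \<in> fst GM a'" "{a*q+b, c*q+d} = (\<lambda>b. a'*q+b) ` e'" by blast
    have e'q: "y \<in> e' \<Longrightarrow> y < q" for y using Dom_G[OF GM ae(1)] ae(2) edge_lt by blast
    have "a*q+b \<in> (\<lambda>b. a'*q+b) ` e'" using ae(3) by blast
    then obtain y where "y \<in> e'" "a*q+b = a'*q+y" by blast
    moreover have "y < q" using e'q \<open>y \<in> e'\<close> by blast
    ultimately have "a = a'" using idx_inj[of b q y a a'] bd by simp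
    have "c*q+d \<in> (\<lambda>b. a'*q+b) ` e'" using ae(3) by blast
    then obtain y' where "y' \<in> e'" "c*q+d = a'*q+y'" by blast
    moreover have "y' < q" using e'q \<open>y' \<in> e'\<close> by blast
    ultimately have "c = a'" using idx_inj[of d q y' c a'] bd by simp
    thus ?thesis using \<open>a = a'\<close> ac by simp
  next
    case False
    with mem obtain P b' d' where P: "P \<in> all_edges p" "b' < q" "d' < q" "snd GM P b' d' = 1"
      "{a*q+b, c*q+d} = {Min P * q + b', Max P * q + d'}"
      unfolding Phi_def by blast
    note mm = pair_mm[OF P(1)]
    from P(5) have "(a*q+b = Min P * q + b' \<and> c*q+d = Max P * q + d') \<or> (a*q+b = Max P * q + d' \<and> c*q+d = Min P * q + b')"
      by (auto simp: doubleton_eq_iff)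
    thus ?thesis
    proof
      assume h: "a*q+b = Min P * q + b' \<and> c*q+d = Max P * q + d'"
      hence "a = Min P \<and> b = b'" "c = Max P \<and> d = d'" using bd P(2,3) idx_inj[of b q b' a "Min P"] idx_inj[of d q d' c "Max P"] by simp_all
      hence "a = Min P" "b = b'" "c = Max P" "d = d'" by simp_all
      thus ?thesis using mm(1) P(4) by simp
    next
      assume h: "a*q+b = Max P * q + d' \<and> c*q+d = Min P * q + b'"
      hence "a = Max P" "c = Min P" using bd P(2,3) idx_inj[of b q d' a "Max P"] idx_inj[of d q b' c "Min P"] by simp_all
      thus ?thesis using mm(2) ac by simp
    qed
  qed
qed



lemma Phi_intra:
  assumes GM: "GM \<in> Dom p q" and a: "a < p" and e: "e \<in> all_edges q"
  shows "(\<lambda>b. a*q+b) ` e \<in> Phi p q GM \<longleftrightarrow> e \<in> fst GM a"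
proof
  assume "e \<in> fst GM a"
  thus "(\<lambda>b. a*q+b) ` e \<in> Phi p q GM" unfolding Phi_def using a by blast
next
  assume mem: "(\<lambda>b. a*q+b) ` e \<in> Phi p q GM"
  obtain i j where ij: "e = {i,j}" "i \<noteq> j" "i < q" "j < q" using edge_form[OF e] by blast
  show "e \<in> fst GM a"
  proof (cases "(\<lambda>b. a*q+b) ` e \<in> (\<Union>a\<in>{..<p}. (\<lambda>e. (\<lambda>b. a*q+b) ` e) ` fst GM a)")
    case True
    then obtain a' e' where ae: "a' < p" "e' \<in> fst GM a'" "(\<lambda>b. a*q+b) ` e = (\<lambda>b. a'*q+b) ` e'" by blast
    have e'q: "y \<in> e' \<Longrightarrow> y < q" for y using Dom_G[OF GM ae(1)] ae(2) edge_lt by blast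
    have "a*q+i \<in> (\<lambda>b. a'*q+b) ` e'" using ae(3) ij by blast
    then obtain y where y: "y \<in> e'" "a*q+i = a'*q+y" by blast
    have "y < q" using e'q y(1) by blast
    hence "a = a'" using idx_inj[of i q y a a'] ij y by simp
    have "inj (\<lambda>b. a*q+b)" by (simp add: inj_def)
    hence "e = e'" using ae(3) \<open>a = a'\<close> by (simp add: inj_image_eq_iff)
    thus ?thesis using ae(2) \<open>a = a'\<close> by simp
  next
    case False
    with mem obtain P b' d' where P: "P \<in> all_edges p" "b' < q" "d' < q"
      "(\<lambda>b. a*q+b) ` e = {Min P * q + b', Max P * q + d'}"
      unfolding Phi_def by blast
    note mm = pair_mm[OF P(1)]
    have "Min P * q + b' \<in> (\<lambda>b. a*q+b) ` e" using P(4) by blast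
    then obtain y where y: "y \<in> e" "Min P * q + b' = a*q+y" by blast
    have "y < q" using y(1) ij by auto
    hence "Min P = a" using idx_inj[of b' q y "Min P" a] P(2) y by simp
    have "Max P * q + d' \<in> (\<lambda>b. a*q+b) ` e" using P(4) by blast
    then obtain y' where y': "y' \<in> e" "Max P * q + d' = a*q+y'" by blast
    have "y' < q" using y'(1) ij by auto
    hence "Max P = a" using idx_inj[of d' q y' "Max P" a] P(3) y' by simp
    thus ?thesis using mm(2) \<open>Min P = a\<close> by simp
  qed
qed

lemma Phi_sub:
  assumes GM: "GM \<in> Dom p q"
  shows "Phi p q GM \<subseteq> all_edges (p*q)"
proof
  fix E assume "E \<in> Phi p q GM"
  hence "E \<in> (\<Union>a\<in>{..<p}. (\<lambda>e. (\<lambda>b. a*q+b) ` e) ` fst GM a) \<or>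
         E \<in> (\<Union>P\<in>all_edges p. {{Min P * q + b, Max P * q + d} | b d. b < q \<and> d < q \<and> snd GM P b d = 1})"
    unfolding Phi_def by blast
  thus "E \<in> all_edges (p*q)"
  proof
    assume "E \<in> (\<Union>a\<in>{..<p}. (\<lambda>e. (\<lambda>b. a*q+b) ` e) ` fst GM a)"
    then obtain a e where ae: "a < p" "e \<in> fst GM a" "E = (\<lambda>b. a*q+b) ` e" by blast
    have "e \<in> all_edges q" using Dom_G[OF GM ae(1)] ae(2) by blast
    then obtain i j where ij: "e = {i,j}" "i \<noteq> j" "i < q" "j < q" using edge_form by blast
    have "E = {a*q+i, a*q+j}" using ae(3) ij(1) by simp
    moreover have "a*q+i < p*q" "a*q+j < p*q" using idx_lt ae(1) ij by auto
    moreover have "a*q+i \<noteq> a*q+j" using ij by simp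
    ultimately show ?thesis unfolding all_edges_def by blast
  next
    assume "E \<in> (\<Union>P\<in>all_edges p. {{Min P * q + b, Max P * q + d} | b d. b < q \<and> d < q \<and> snd GM P b d = 1})"
    then obtain P b d where P: "P \<in> all_edges p" "b < q" "d < q" "E = {Min P * q + b, Max P * q + d}" by blast
    note mm = pair_mm[OF P(1)]
    have "Min P * q + b < p*q" "Max P * q + d < p*q" using idx_lt mm P by auto
    moreover have "Min P * q + b \<noteq> Max P * q + d" using idx_inj[of b q d "Min P" "Max P"] P mm by auto
    ultimately show ?thesis unfolding all_edges_def using P(4) by blast
  qed
qed

lemma blockM_Phi:
  assumes GM: "GM \<in> Dom p q" and ac: "a < c" "c < p"
  shows "blockM q (Phi p q GM) a c = snd GM {a,c}"
proof (intro ext)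
  fix b d
  have M: "snd GM {a,c} \<in> zero_one_mats q" using Dom_M[OF GM ac_edge[OF ac]] unfolding LSS_def by simp
  show "blockM q (Phi p q GM) a c b d = snd GM {a,c} b d"
  proof (cases "b < q \<and> d < q")
    case True
    have "snd GM {a,c} b d \<in> {0,1}" using M unfolding zero_one_mats_def by blast
    thus ?thesis using True Phi_cross[OF GM ac, of b d] unfolding blockM_def by auto
  next
    case False
    thus ?thesis using M unfolding zero_one_mats_def blockM_def by auto
  qed
qed

lemma Phi_good:
  assumes GM: "GM \<in> Dom p q"
  shows "goodG p q (Phi p q GM)"
  unfolding goodG_def
proof (intro conjI allI impI)
  show "Phi p q GM \<in> graphs (p*q)" using Phi_sub[OF GM] unfolding graphs_def by simp
  fix a c assume ac: "a < c \<and> c < p"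
  have "snd GM {a,c} \<in> LSS q" using Dom_M[OF GM ac_edge] ac by simp
  thus "line_sum_symmetric q (blockM q (Phi p q GM) a c)"
    using blockM_Phi[OF GM] ac unfolding LSS_def by simp
qed

lemma Phi_inj: "inj_on (Phi p q) (Dom p q)"
proof
  fix GM GM' assume GM: "GM \<in> Dom p q" and GM': "GM' \<in> Dom p q" and eq: "Phi p q GM = Phi p q GM'"
  have f1: "fst GM \<in> PiE {..<p} (\<lambda>_. graphs q)" "fst GM' \<in> PiE {..<p} (\<lambda>_. graphs q)"
    using GM GM' unfolding Dom_def by (auto simp: mem_Times_iff)
  have f2: "snd GM \<in> PiE (all_edges p) (\<lambda>_. LSS q)" "snd GM' \<in> PiE (all_edges p) (\<lambda>_. LSS q)"
    using GM GM' unfolding Dom_def by (auto simp: mem_Times_iff)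
  have "fst GM = fst GM'"
  proof
    fix a show "fst GM a = fst GM' a"
    proof (cases "a < p")
      case True
      have s1: "fst GM a \<subseteq> all_edges q" by (rule Dom_G[OF GM True])
      have s2: "fst GM' a \<subseteq> all_edges q" by (rule Dom_G[OF GM' True])
      show ?thesis
      proof
        show "fst GM a \<subseteq> fst GM' a"
        proof
          fix e assume e: "e \<in> fst GM a"
          hence ee: "e \<in> all_edges q" using s1 by blast
          have "(\<lambda>b. a*q+b) ` e \<in> Phi p q GM'" using Phi_intra[OF GM True ee] e eq by simp
          thus "e \<in> fst GM' a" using Phi_intra[OF GM' True ee] by simp
        qed
        show "fst GM' a \<subseteq> fst GM a"
        proof
          fix e assume e: "e \<in> fst GM' a"
          hence ee: "e \<in> all_edges q" using s2 by blast
          have "(\<lambda>b. a*q+b) ` e \<in> Phi p q GM" using Phi_intra[OF GM' True ee] e eq by simp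
          thus "e \<in> fst GM a" using Phi_intra[OF GM True ee] by simp
        qed
      qed
    next
      case False
      have "fst GM a = undefined" by (rule PiE_arb[OF f1(1)]) (use False in simp)
      moreover have "fst GM' a = undefined" by (rule PiE_arb[OF f1(2)]) (use False in simp)
      ultimately show ?thesis by simp
    qed
  qed
  moreover have "snd GM = snd GM'"
  proof
    fix P show "snd GM P = snd GM' P"
    proof (cases "P \<in> all_edges p")
      case True
      note mm = pair_mm[OF True]
      have "snd GM P = snd GM {Min P, Max P}" by (rule arg_cong[where f="snd GM", OF mm(1)])
      also have "... = blockM q (Phi p q GM) (Min P) (Max P)"
        by (rule blockM_Phi[OF GM mm(2,3), symmetric])
      also have "... = blockM q (Phi p q GM') (Min P) (Max P)" using eq by simp
      also have "... = snd GM' {Min P, Max P}"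
        by (rule blockM_Phi[OF GM' mm(2,3)])
      also have "... = snd GM' P" by (rule arg_cong[where f="snd GM'", OF mm(1), symmetric])
      finally show ?thesis .
    next
      case False
      have "snd GM P = undefined" by (rule PiE_arb[OF f2(1) False])
      moreover have "snd GM' P = undefined" by (rule PiE_arb[OF f2(2) False])
      ultimately show ?thesis by simp
    qed
  qed
  ultimately show "GM = GM'" by (simp add: prod_eq_iff)
qed



theorem mainTheorem1:
  fixes p q :: nat
  assumes "p \<ge> 1" and "q \<ge> 1"
  shows "int (L_s p q) \<ge> 2 ^ (p * q * (q - 1) div 2) * int (N_s q) ^ (p * (p - 1) div 2) - 1"
proof -
  define GS where "GS = {E. goodG p q E}"
  define SS where "SS = {E \<in> graphs (p*q). E \<noteq> {} \<and> separable p q (normalized_laplacian (p*q) E)}"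
  have finG: "finite (graphs (p*q))" unfolding graphs_Pow using finite_all_edges by simp
  have GSsub: "GS \<subseteq> graphs (p*q)" unfolding GS_def goodG_def by auto
  have finGS: "finite GS" using GSsub finG finite_subset by blast
  have finSS: "finite SS" unfolding SS_def using finG by simp
  have img: "Phi p q ` Dom p q \<subseteq> GS" unfolding GS_def using Phi_good by blast
  have c1: "card (Dom p q) \<le> card GS"
    using card_inj_on_le[OF Phi_inj img finGS] .
  have emp: "{} \<in> GS"
  proof -
    have "blockM q {} a c = (\<lambda>_ _. 0)" for a c by (intro ext) (simp add: blockM_def)
    thus ?thesis unfolding GS_def goodG_def graphs_def line_sum_symmetric_def by simp
  qed
  have sub2: "GS - {{}} \<subseteq> SS"
  proof
    fix E assume E: "E \<in> GS - {{}}"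
    hence g: "goodG p q E" and ne: "E \<noteq> {}" unfolding GS_def by auto
    have "separable p q (normalized_laplacian (p*q) E)" by (rule good_sep[OF g ne assms])
    moreover have "E \<in> graphs (p*q)" using g unfolding goodG_def by simp
    ultimately show "E \<in> SS" unfolding SS_def using ne by simp
  qed
  have c2: "card (GS - {{}}) \<le> L_s p q"
    unfolding L_s_def SS_def[symmetric] by (rule card_mono[OF finSS sub2])
  have c3: "card (GS - {{}}) = card GS - 1" using emp finGS by simp
  have GSpos: "card GS \<ge> 1" using emp finGS by (metis One_nat_def Suc_leI card_gt_0_iff empty_iff)
  have "int (L_s p q) \<ge> int (card GS) - 1" using c2 c3 GSpos by linarith
  moreover have "int (card GS) \<ge> int (card (Dom p q))" using c1 by simp
  moreover have "int (card (Dom p q)) = 2 ^ (p * q * (q - 1) div 2) * int (N_s q) ^ (p * (p - 1) div 2)"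
    unfolding card_Dom arith_final by simp
  ultimately show ?thesis by linarith
qed

end
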